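(* Assume the Margin assumption holds and that $\|\cdot\|$ and $\|\cdot\|_*$ are strictly convex. Let $(y_t,b_t)$ and $d_t$, $t\ge1$, be generated by the SMM algorithm (with the initialization terminating). Then for all $t\ge1$, $$y_*^\top v(y_t)\ \ge\ \|y_*\|_*\,\frac{d_*}{d_t}\ >0.$$
   Context: Setting: $\mathcal{A}\subseteq\mathbb{R}^d$, labels $\ell(A)\in\{\pm1\}$, $\mathcal{A}^\pm=\{A\in\mathcal{A}:\ell(A)=\pm1\}$; $\operatorname{sign}(0)=+1$; norm $\|\cdot\|$ with dual $\|y\|_*=\max_{\|w\|\le1}y^\top w$; constant $c>0$; strict convexity of a norm $N$: $N(\beta w+(1-\beta)z)<\beta N(w)+(1-\beta)N(z)$ for $\beta\in(0,1)$ and $w,z$ non-collinear; under it, for $y\neq0$, $v(y)$ is the unique maximizer of $y^\top w$ over $\|w\|\le1$, and $v(0)=0$. Predicted label $\hat\ell(x,y,b)=\operatorname{sign}(y^\top x+b-2\|y\|_*/c)$. Response: for $y\ne0$, $r(A,y,b)=A+(\tfrac2c-\tfrac{y^\top A+b}{\|y\|_*})v(y)$ if $0\le\tfrac{y^\top A+b}{\|y\|_*}<\tfrac2c$, else $A$. Proxy: for $y\ne0$, $s(A,y,b)=A-\tfrac{y^\top A+b}{\|y\|_*}v(y)$ if $0\le\tfrac{y^\top A+b}{\|y\|_*}<\tfrac2c$ and $\ell(A)=-1$; $=A+(\tfrac2c-\tfrac{y^\top A+b}{\|y\|_*})v(y)$ if that range condition holds and $\ell(A)=+1$; $=A$ otherwise;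 $r(A,0,b)=s(A,0,b)=A$. Margin function $h(y,b;\widetilde{\mathcal{A}}^+,\widetilde{\mathcal{A}}^-)=\min\{\min_{x\in\widetilde{\mathcal{A}}^+}(y^\top x+b),\min_{x\in\widetilde{\mathcal{A}}^-}(-y^\top x-b)\}$. Margin assumption: $d_*:=\max_{y\ne0,b\in\mathbb{R}}\min_{A\in\mathcal{A}}\ell(A)\frac{y^\top A+b}{\|y\|_*}$ is attained at some $(y_*,b_* )$ with $y_*\neq0$, and $d_*>0$. SMM algorithm: agents with true features in $\mathcal{A}$ arrive sequentially. Initialization: start with $\widetilde{\mathcal{A}}_0^\pm=\emptyset$ and $(y,b)=(0,1)$; each arriving agent (responding with its true $A$ since $y=0$) has its label revealed and $A$ is added to $\widetilde{\mathcal{A}}_0^+$ or $\widetilde{\mathcal{A}}_0^-$ by label; then $b:=-1$ if $\widetilde{\mathcal{A}}_0^+=\emptyset$, else $b:=+1$ if $\widetilde{\mathcal{A}}_0^-=\emptyset$; stop once both are nonempty. Let $(y_1,b_1)$ be an optimal solution, and $d_1$ the optimal value, of $\max\{h(y,b;\widetilde{\mathcal{A}}_0^+,\widetilde{\mathcal{A}}_0^-):\|y\|_*\le1,b\in\mathbb{R}\}$. For $t=1,2,\dots$: agent $A_t\in\mathcal{A}$ is shown $(y_t,b_t)$, responds $r(A_t,y_t,b_t)$, is predicted $\hat\ell(r(A_t,y_t,b_t),y_t,b_t)$; then $\ell(A_t)$ is revealed, $s(A_t,y_t,b_t)$ is added to $\widetilde{\mathcal{A}}_t^+:=\widetilde{\mathcal{A}}_{t-1}^+\cup\{s(A_t,y_t,b_t)\}$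 if $\ell(A_t)=+1$ (else to $\widetilde{\mathcal{A}}_t^-$, the other set being unchanged), and $(y_{t+1},b_{t+1})$ is an optimal solution, with optimal value $d_{t+1}$, of $\max\{h(y,b;\widetilde{\mathcal{A}}_t^+,\widetilde{\mathcal{A}}_t^-):\|y\|_*\le1,b\in\mathbb{R}\}$. *)

theory Defs
  imports "HOL-Analysis.Analysis"
begin

definition is_norm :: "(real^'n \<Rightarrow> real) \<Rightarrow> bool" where
  "is_norm N \<longleftrightarrow> (\<forall>x. N x = 0 \<longleftrightarrow> x = 0) \<and> (\<forall>a x. N (a *\<^sub>R x) = \<bar>a\<bar> * N x)
     \<and> (\<forall>x z. N (x + z) \<le> N x + N z)"

definition dual_norm :: "(real^'n \<Rightarrow> real) \<Rightarrow> real^'n \<Rightarrow> real" where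
  "dual_norm N y = Sup {y \<bullet> w | w. N w \<le> 1}"

definition collinear_vec :: "real^'n \<Rightarrow> real^'n \<Rightarrow> bool" where
  "collinear_vec w z \<longleftrightarrow> (\<exists>a. w = a *\<^sub>R z) \<or> (\<exists>a. z = a *\<^sub>R w)"

definition strictly_convex_norm :: "(real^'n \<Rightarrow> real) \<Rightarrow> bool" where
  "strictly_convex_norm N \<longleftrightarrow> (\<forall>\<beta> w z. 0 < \<beta> \<and> \<beta> < 1 \<and> \<not> collinear_vec w z \<longrightarrow>
      N (\<beta> *\<^sub>R w + (1 - \<beta>) *\<^sub>R z) < \<beta> * N w + (1 - \<beta>) * N z)"

definition vmax :: "(real^'n \<Rightarrow> real) \<Rightarrow> real^'n \<Rightarrow> real^'n" where
  "vmax N y = (if y = 0 then 0 else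
     (THE w. N w \<le> 1 \<and> (\<forall>z. N z \<le> 1 \<longrightarrow> y \<bullet> z \<le> y \<bullet> w)))"

definition proxy :: "(real^'n \<Rightarrow> real) \<Rightarrow> real \<Rightarrow> (real^'n \<Rightarrow> real) \<Rightarrow> real^'n \<Rightarrow> real^'n \<Rightarrow> real \<Rightarrow> real^'n" where
  "proxy N c lab A y b =
    (if y = 0 then A else
      (let q = (y \<bullet> A + b) / dual_norm N y in
        if 0 \<le> q \<and> q < 2 / c \<and> lab A = -1 then A - q *\<^sub>R vmax N y
        else if 0 \<le> q \<and> q < 2 / c \<and> lab A = 1 then A + (2 / c - q) *\<^sub>R vmax N y
        else A))"

definition margin_h :: "real^'n \<Rightarrow> real \<Rightarrow> (real^'n) set \<Rightarrow> (real^'n) set \<Rightarrow> real" where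
  "margin_h y b P M = min (Min ((\<lambda>x. y \<bullet> x + b) ` P)) (Min ((\<lambda>x. - (y \<bullet> x) - b) ` M))"

end

theory Submission imports Defs begin

locale nm =
  fixes N :: "real^'n \<Rightarrow> real"
  assumes norm: "is_norm N"
begin

lemma N0[simp]: "N 0 = 0" using norm unfolding is_norm_def by auto
lemma N_eq0: "N x = 0 \<longleftrightarrow> x = 0" using norm unfolding is_norm_def by auto
lemma N_scale: "N (a *\<^sub>R x) = \<bar>a\<bar> * N x" using norm unfolding is_norm_def by auto
lemma N_tri: "N (x + z) \<le> N x + N z" using norm unfolding is_norm_def by auto
lemma N_nonneg: "N x \<ge> 0"
proof -
  have "N (x + (-1) *\<^sub>R x) \<le> N x + N ((-1) *\<^sub>R x)" by (rule N_tri)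
  moreover have "N ((-1) *\<^sub>R x) = N x" by (simp only: N_scale)
  ultimately show ?thesis by simp
qed
lemma N_pos: "x \<noteq> 0 \<Longrightarrow> N x > 0" using N_nonneg N_eq0 by (metis less_eq_real_def)

lemma N_convex: "convex_on UNIV N"
  unfolding convex_on_def
proof (intro conjI ballI allI impI)
  fix x y :: "real^'n" and u v :: real
  assume "0 \<le> u" "0 \<le> v" "u + v = 1"
  have "N (u *\<^sub>R x + v *\<^sub>R y) \<le> N (u *\<^sub>R x) + N (v *\<^sub>R y)" by (rule N_tri)
  also have "\<dots> = u * N x + v * N y" using \<open>0 \<le> u\<close> \<open>0 \<le> v\<close> by (simp add: N_scale)
  finally show "N (u *\<^sub>R x + v *\<^sub>R y) \<le> u * N x + v * N y" .
qed simp

lemma N_cont: "continuous_on UNIV N"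
  using convex_on_continuous[OF open_UNIV N_convex] .

lemma N_lower: "\<exists>m>0. \<forall>x. m * norm x \<le> N x"
proof -
  have "compact (sphere (0::real^'n) 1)" by simp
  moreover have "sphere (0::real^'n) 1 \<noteq> {}" by simp
  moreover have "continuous_on (sphere 0 1) N" using N_cont continuous_on_subset by blast
  ultimately obtain x0 where x0: "x0 \<in> sphere 0 1" "\<forall>x\<in>sphere 0 1. N x0 \<le> N x"
    using continuous_attains_inf by blast
  have "x0 \<noteq> 0" using x0(1) by auto
  hence mpos: "N x0 > 0" by (rule N_pos)
  have "N x0 * norm x \<le> N x" for x
  proof (cases "x = 0")
    case False
    hence "(1 / norm x) *\<^sub>R x \<in> sphere 0 1" by simp
    hence "N x0 \<le> N ((1 / norm x) *\<^sub>R x)" using x0(2) by blast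
    also have "\<dots> = N x / norm x" by (simp add: N_scale)
    finally show ?thesis using False by (simp add: field_simps)
  qed simp
  thus ?thesis using mpos by (metis mult.commute)
qed

definition "B = {w. N w \<le> 1}"

lemma B_compact: "compact B"
proof -
  obtain m where m: "m > 0" "\<forall>x. m * norm x \<le> N x" using N_lower by blast
  have "closed B" unfolding B_def by (rule closed_Collect_le[OF N_cont continuous_on_const])
  moreover have "bounded B" unfolding bounded_iff
  proof (intro exI ballI)
    fix x assume "x \<in> B"
    hence "N x \<le> 1" unfolding B_def by simp
    hence "m * norm x \<le> 1" using m(2) order_trans by blast
    thus "norm x \<le> 1 / m" using m(1) by (simp add: field_simps mult.commute)
  qed
  ultimately show ?thesis by (simp add: compact_eq_bounded_closed)
qed

lemma B_ne: "0 \<in> B" unfolding B_def by simp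

lemma attain: "\<exists>w. N w \<le> 1 \<and> (\<forall>z. N z \<le> 1 \<longrightarrow> y \<bullet> z \<le> y \<bullet> w)"
proof -
  have "continuous_on B (\<lambda>w. y \<bullet> w)" by (intro continuous_intros)
  then obtain w where "w \<in> B" "\<forall>z\<in>B. y \<bullet> z \<le> y \<bullet> w"
    using continuous_attains_sup[OF B_compact] B_ne by blast
  thus ?thesis unfolding B_def by auto
qed

lemma dual_eq:
  assumes "N w \<le> 1" "\<forall>z. N z \<le> 1 \<longrightarrow> y \<bullet> z \<le> y \<bullet> w"
  shows "dual_norm N y = y \<bullet> w"
  unfolding dual_norm_def
  by (rule cSup_eq_maximum) (use assms in auto)

lemma inner_le_dual: "N w \<le> 1 \<Longrightarrow> y \<bullet> w \<le> dual_norm N y"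
  using attain[of y] dual_eq by fastforce

lemma dual0: "dual_norm N 0 = 0"
  using dual_eq[of 0 0] by simp

lemma dual_pos: assumes "y \<noteq> 0" shows "dual_norm N y > 0"
proof -
  have np: "N y > 0" using assms by (rule N_pos)
  have "N ((1 / N y) *\<^sub>R y) = 1" using np by (simp add: N_scale)
  hence "y \<bullet> ((1 / N y) *\<^sub>R y) \<le> dual_norm N y" using inner_le_dual by (metis order_refl)
  moreover have "y \<bullet> ((1 / N y) *\<^sub>R y) > 0" using np assms by simp
  ultimately show ?thesis by linarith
qed

lemma dual_scale: assumes "a > 0" shows "dual_norm N (a *\<^sub>R y) = a * dual_norm N y"
proof -
  obtain w where w: "N w \<le> 1" "\<forall>z. N z \<le> 1 \<longrightarrow> y \<bullet> z \<le> y \<bullet> w" using attain by blast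
  have "\<forall>z. N z \<le> 1 \<longrightarrow> (a *\<^sub>R y) \<bullet> z \<le> (a *\<^sub>R y) \<bullet> w"
    using w(2) assms by (simp add: mult_left_mono)
  hence "dual_norm N (a *\<^sub>R y) = (a *\<^sub>R y) \<bullet> w" using dual_eq w(1) by blast
  thus ?thesis using dual_eq[OF w] by simp
qed

end

locale nms = nm N for N :: "real^'n \<Rightarrow> real" +
  assumes sc: "strictly_convex_norm N"
begin

lemma max_unique:
  assumes y: "y \<noteq> 0"
    and w1: "N w1 \<le> 1" "\<forall>z. N z \<le> 1 \<longrightarrow> y \<bullet> z \<le> y \<bullet> w1"
    and w2: "N w2 \<le> 1" "\<forall>z. N z \<le> 1 \<longrightarrow> y \<bullet> z \<le> y \<bullet> w2"
  shows "w1 = w2"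
proof (rule ccontr)
  assume ne: "w1 \<noteq> w2"
  have D: "y \<bullet> w1 = y \<bullet> w2" using w1 w2 by (simp add: order_antisym)
  have Dpos: "y \<bullet> w1 > 0" using dual_pos[OF y] dual_eq[OF w1] by simp
  have nc: "\<not> collinear_vec w1 w2"
  proof
    assume "collinear_vec w1 w2"
    then consider a where "w1 = a *\<^sub>R w2" | a where "w2 = a *\<^sub>R w1"
      unfolding collinear_vec_def by blast
    then show False
    proof cases
      case (1 a)
      hence "a * (y \<bullet> w2) = y \<bullet> w2" using D by simp
      hence "a = 1" using Dpos D by simp
      thus False using 1 ne by simp
    next
      case (2 a)
      hence "a * (y \<bullet> w1) = y \<bullet> w1" using D by simp
      hence "a = 1" using Dpos by simp
      thus False using 2 ne by simp
    qed
  qed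
  define m where "m = (1/2) *\<^sub>R w1 + (1 - 1/2) *\<^sub>R w2"
  have "N m < (1/2) * N w1 + (1 - 1/2) * N w2"
    using sc[unfolded strictly_convex_norm_def, rule_format, of "1/2" w1 w2] nc unfolding m_def by simp
  hence Nm: "N m < 1" using w1(1) w2(1) by simp
  have ym: "y \<bullet> m = y \<bullet> w1" unfolding m_def using D by (simp add: inner_add_right)
  hence "m \<noteq> 0" using Dpos by auto
  hence Nmp: "N m > 0" by (rule N_pos)
  have "N ((1 / N m) *\<^sub>R m) = 1" using Nmp by (simp add: N_scale)
  hence "y \<bullet> ((1 / N m) *\<^sub>R m) \<le> y \<bullet> w1" using w1(2) by (metis order_refl)
  hence "(y \<bullet> w1) / N m \<le> y \<bullet> w1" using ym by simp
  hence "y \<bullet> w1 \<le> (y \<bullet> w1) * N m" using Nmp by (simp add: field_simps)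
  thus False using Nm Dpos by (simp add: mult_less_cancel_left1 not_le)
qed

lemma vmax_prop:
  assumes "y \<noteq> 0"
  shows "N (vmax N y) \<le> 1 \<and> (\<forall>z. N z \<le> 1 \<longrightarrow> y \<bullet> z \<le> y \<bullet> vmax N y)"
proof -
  obtain w where w: "N w \<le> 1 \<and> (\<forall>z. N z \<le> 1 \<longrightarrow> y \<bullet> z \<le> y \<bullet> w)" using attain by blast
  have ex: "\<exists>!w. N w \<le> 1 \<and> (\<forall>z. N z \<le> 1 \<longrightarrow> y \<bullet> z \<le> y \<bullet> w)"
    using w max_unique[OF assms] by blast
  have "vmax N y = (THE w. N w \<le> 1 \<and> (\<forall>z. N z \<le> 1 \<longrightarrow> y \<bullet> z \<le> y \<bullet> w))"
    unfolding vmax_def using assms by simp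
  thus ?thesis using theI'[OF ex] by simp
qed

lemma vmax_eq:
  assumes "y \<noteq> 0" "N w \<le> 1" "\<forall>z. N z \<le> 1 \<longrightarrow> y \<bullet> z \<le> y \<bullet> w"
  shows "vmax N y = w"
  using max_unique[OF assms(1) _ _ assms(2,3)] vmax_prop[OF assms(1)] by blast

lemma limit_lemma:
  assumes yle: "\<forall>w. N w \<le> 1 \<longrightarrow> y \<bullet> w \<le> 1"
    and H: "\<forall>r. 0 < r \<and> r < 1 \<longrightarrow> (\<exists>w. N w \<le> 1 \<and> u \<bullet> w \<ge> \<rho> \<and>
              (1 - r) * (y \<bullet> w) + r * (u \<bullet> w) \<ge> (1 - r) + r * \<rho>)"
  shows "u \<bullet> vmax N y \<ge> \<rho>"
proof (rule ccontr)
  assume neg: "\<not> ?thesis"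
  define K where "K = B \<inter> {w. u \<bullet> w \<ge> \<rho>}"
  have "closed {w. u \<bullet> w \<ge> \<rho>}"
    using closed_Collect_le[of "\<lambda>_. \<rho>" "\<lambda>w. u \<bullet> w"] by (simp add: continuous_on_const continuous_on_inner continuous_on_id)
  hence Kc: "compact K" unfolding K_def using B_compact by (simp add: compact_Int_closed)
  obtain w0 where w0: "N w0 \<le> 1" "u \<bullet> w0 \<ge> \<rho>" using H[rule_format, of "1/2"] by auto
  hence Kne: "K \<noteq> {}" unfolding K_def B_def by auto
  have "continuous_on K (\<lambda>w. y \<bullet> w)" by (intro continuous_intros)
  then obtain wk where wk: "wk \<in> K" "\<forall>z\<in>K. y \<bullet> z \<le> y \<bullet> wk"
    using continuous_attains_sup[OF Kc Kne] by blast
  have "continuous_on B (\<lambda>w. u \<bullet> w)" by (intro continuous_intros)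
  then obtain wc where wc: "wc \<in> B" "\<forall>z\<in>B. u \<bullet> z \<le> u \<bullet> wc"
    using continuous_attains_sup[OF B_compact] B_ne by blast
  define C where "C = u \<bullet> wc"
  have Cb: "\<And>w. N w \<le> 1 \<Longrightarrow> u \<bullet> w \<le> C" using wc unfolding C_def B_def by auto
  have wkB: "N wk \<le> 1" "u \<bullet> wk \<ge> \<rho>" using wk(1) unfolding K_def B_def by auto
  have Mk: "y \<bullet> wk < 1"
  proof (rule ccontr)
    assume "\<not> y \<bullet> wk < 1"
    hence "y \<bullet> wk \<ge> 1" by simp
    hence mx: "\<forall>z. N z \<le> 1 \<longrightarrow> y \<bullet> z \<le> y \<bullet> wk" using yle by force
    have "y \<noteq> 0" using \<open>y \<bullet> wk \<ge> 1\<close> by auto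
    hence "vmax N y = wk" using vmax_eq wkB(1) mx by blast
    thus False using neg wkB(2) by simp
  qed
  define D where "D = C - \<rho>"
  have D0: "D \<ge> 0" using Cb[OF wkB(1)] wkB(2) unfolding D_def by simp
  define l where "l = min (1/2) ((1 - y \<bullet> wk) / (4 * (D + 1)))"
  have "(1 - y \<bullet> wk) / (4 * (D + 1)) > 0" using Mk D0 by (intro divide_pos_pos) auto
  hence l0: "0 < l" "l \<le> 1/2" unfolding l_def by (auto simp: min_def)
  have l1: "l * (D + 1) \<le> (1 - y \<bullet> wk) / 4"
  proof -
    have "l \<le> (1 - y \<bullet> wk) / (4 * (D + 1))" unfolding l_def by simp
    hence "l * (D + 1) \<le> (1 - y \<bullet> wk) / (4 * (D + 1)) * (D + 1)"
      using D0 by (intro mult_right_mono) auto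
    also have "\<dots> = (1 - y \<bullet> wk) / 4" using D0 by (simp add: field_simps)
    finally show ?thesis .
  qed
  obtain w where w: "N w \<le> 1" "u \<bullet> w \<ge> \<rho>"
    "(1 - l) * (y \<bullet> w) + l * (u \<bullet> w) \<ge> (1 - l) + l * \<rho>"
    using H[rule_format, of l] l0 by auto
  have "w \<in> K" unfolding K_def B_def using w by auto
  hence yw: "y \<bullet> w \<le> y \<bullet> wk" using wk(2) by blast
  have "l * (u \<bullet> w) \<le> l * C" using Cb[OF w(1)] l0 by (simp add: mult_left_mono)
  hence "(1 - l) * (y \<bullet> w) \<ge> (1 - l) - l * D" using w(3) unfolding D_def by (simp add: algebra_simps)
  moreover have "(1 - l) * (y \<bullet> w) \<le> (1 - l) * (y \<bullet> wk)" using yw l0 by (simp add: mult_left_mono)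
  ultimately have "(1 - l) * (1 - y \<bullet> wk) \<le> l * D" by (simp add: algebra_simps)
  moreover have "(1/2) * (1 - y \<bullet> wk) \<le> (1 - l) * (1 - y \<bullet> wk)"
    using l0 Mk by (simp add: mult_right_mono)
  moreover have "l * D \<le> l * (D + 1)" using l0 by simp
  ultimately have "1/2 * (1 - y \<bullet> wk) \<le> (1 - y \<bullet> wk) / 4" using l1 by (meson order_trans)
  thus False using Mk by simp
qed

end

lemma mh_ge:
  assumes "finite P" "P \<noteq> {}" "finite M" "M \<noteq> {}"
  shows "r \<le> margin_h y b P M \<longleftrightarrow> (\<forall>x\<in>P. r \<le> y \<bullet> x + b) \<and> (\<forall>x\<in>M. r \<le> - (y \<bullet> x) - b)"
  using assms by (simp add: margin_h_def)

lemma mh_le: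
  assumes "finite P" "P \<noteq> {}" "finite M" "M \<noteq> {}"
  shows "margin_h y b P M \<le> r \<longleftrightarrow> (\<exists>x\<in>P. y \<bullet> x + b \<le> r) \<or> (\<exists>x\<in>M. - (y \<bullet> x) - b \<le> r)"
  using assms by (simp add: margin_h_def min_le_iff_disj Min_le_iff)

context nms begin

lemma key:
  assumes fin: "finite P" "P \<noteq> {}" "finite M" "M \<noteq> {}"
    and ys: "ystar \<noteq> 0" and ds: "dstar > 0"
    and invP: "\<forall>x\<in>P. ystar \<bullet> x + bstar \<ge> dstar * dual_norm N ystar"
    and invM: "\<forall>x\<in>M. - (ystar \<bullet> x) - bstar \<ge> dstar * dual_norm N ystar"
    and yfe: "dual_norm N y \<le> 1" and dd: "d = margin_h y b P M"
    and opt: "\<forall>y' b'. dual_norm N y' \<le> 1 \<longrightarrow> margin_h y' b' P M \<le> d"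
  shows "ystar \<bullet> vmax N y \<ge> dual_norm N ystar * (dstar / d) \<and> d \<ge> dstar"
proof -
  define S where "S = dual_norm N ystar"
  have Sp: "S > 0" unfolding S_def using dual_pos[OF ys] .
  define u where "u = (1 / S) *\<^sub>R ystar"
  define bu where "bu = bstar / S"
  have hu: "dstar \<le> margin_h u bu P M"
    unfolding mh_ge[OF fin]
  proof (intro conjI ballI)
    fix x assume "x \<in> P"
    hence "dstar * S \<le> ystar \<bullet> x + bstar" using invP S_def by auto
    thus "dstar \<le> u \<bullet> x + bu" unfolding u_def bu_def using Sp by (simp add: field_simps)
  next
    fix x assume "x \<in> M"
    hence "dstar * S \<le> - (ystar \<bullet> x) - bstar" using invM S_def by auto
    thus "dstar \<le> - (u \<bullet> x) - bu" unfolding u_def bu_def using Sp by (simp add: field_simps)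
  qed
  have hgen: "margin_h z \<beta> P M \<le> dual_norm N z * d" for z \<beta>
  proof (cases "z = 0")
    case True
    obtain x where "x \<in> P" using fin by auto
    obtain x' where "x' \<in> M" using fin by auto
    have "(\<exists>x\<in>P. z \<bullet> x + \<beta> \<le> 0) \<or> (\<exists>x\<in>M. - (z \<bullet> x) - \<beta> \<le> 0)"
      using True \<open>x \<in> P\<close> \<open>x' \<in> M\<close> by (cases "\<beta> \<le> 0") auto
    thus ?thesis using True dual0 mh_le[OF fin] by simp
  next
    case False
    define m where "m = dual_norm N z"
    have mp: "m > 0" unfolding m_def using dual_pos[OF False] .
    have "dual_norm N ((1/m) *\<^sub>R z) = 1" using dual_scale[of "1/m" z] mp unfolding m_def by simp
    hence "margin_h ((1/m) *\<^sub>R z) (\<beta>/m) P M \<le> d" using opt by simp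
    hence "(\<exists>x\<in>P. ((1/m) *\<^sub>R z) \<bullet> x + \<beta>/m \<le> d) \<or> (\<exists>x\<in>M. - (((1/m) *\<^sub>R z) \<bullet> x) - \<beta>/m \<le> d)"
      using mh_le[OF fin] by blast
    hence "(\<exists>x\<in>P. z \<bullet> x + \<beta> \<le> m * d) \<or> (\<exists>x\<in>M. - (z \<bullet> x) - \<beta> \<le> m * d)"
      using mp by (auto simp: field_simps)
    thus ?thesis using mh_le[OF fin] unfolding m_def by blast
  qed
  have du: "dual_norm N u = 1" unfolding u_def using dual_scale[of "1/S" ystar] Sp S_def by simp
  have dge: "d \<ge> dstar" using hgen[of u bu] hu du by simp
  hence dp: "d > 0" using ds by simp
  have dle: "\<forall>x\<in>P. d \<le> y \<bullet> x + b" "\<forall>x\<in>M. d \<le> - (y \<bullet> x) - b"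
    using mh_ge[OF fin, of d y b] dd by auto
  define \<rho> where "\<rho> = dstar / d"
  have yle: "\<forall>w. N w \<le> 1 \<longrightarrow> y \<bullet> w \<le> 1" using inner_le_dual yfe order_trans by meson
  have H: "\<forall>r. 0 < r \<and> r < 1 \<longrightarrow> (\<exists>w. N w \<le> 1 \<and> u \<bullet> w \<ge> \<rho> \<and>
              (1 - r) * (y \<bullet> w) + r * (u \<bullet> w) \<ge> (1 - r) + r * \<rho>)"
  proof (intro allI impI)
    fix r :: real assume r: "0 < r \<and> r < 1"
    define z where "z = (1 - r) *\<^sub>R y + r *\<^sub>R u"
    define \<beta> where "\<beta> = (1 - r) * b + r * bu"
    have hz: "(1 - r) * d + r * dstar \<le> margin_h z \<beta> P M"
      unfolding mh_ge[OF fin]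
    proof (intro conjI ballI)
      fix x assume x: "x \<in> P"
      have "dstar \<le> u \<bullet> x + bu" using hu x mh_ge[OF fin] by blast
      moreover have "d \<le> y \<bullet> x + b" using dle x by blast
      ultimately have "(1 - r) * d + r * dstar \<le> (1 - r) * (y \<bullet> x + b) + r * (u \<bullet> x + bu)"
        using r by (intro add_mono mult_left_mono) auto
      thus "(1 - r) * d + r * dstar \<le> z \<bullet> x + \<beta>"
        unfolding z_def \<beta>_def by (simp add: inner_add_left algebra_simps)
    next
      fix x assume x: "x \<in> M"
      have "dstar \<le> - (u \<bullet> x) - bu" using hu x mh_ge[OF fin] by blast
      moreover have "d \<le> - (y \<bullet> x) - b" using dle x by blast
      ultimately have "(1 - r) * d + r * dstar \<le> (1 - r) * (- (y \<bullet> x) - b) + r * (- (u \<bullet> x) - bu)"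
        using r by (intro add_mono mult_left_mono) auto
      thus "(1 - r) * d + r * dstar \<le> - (z \<bullet> x) - \<beta>"
        unfolding z_def \<beta>_def by (simp add: inner_add_left algebra_simps)
    qed
    define m where "m = dual_norm N z"
    have mge: "(1 - r) * d + r * dstar \<le> m * d" using hz hgen[of z \<beta>] unfolding m_def by simp
    have "(1 - r) * d + r * dstar > 0" using r dp ds by (simp add: add_pos_nonneg)
    hence "m > 0" using mge dp by (metis mult_le_0_iff not_less order_le_less_trans less_eq_real_def)
    hence zn: "z \<noteq> 0" unfolding m_def using dual0 by auto
    define w where "w = vmax N z"
    have wp: "N w \<le> 1" "\<forall>z'. N z' \<le> 1 \<longrightarrow> z \<bullet> z' \<le> z \<bullet> w" using vmax_prop[OF zn] unfolding w_def by auto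
    have "m = z \<bullet> w" unfolding m_def using dual_eq[OF wp] .
    hence mw: "m = (1 - r) * (y \<bullet> w) + r * (u \<bullet> w)"
      unfolding z_def by (simp add: inner_add_left)
    have "(1 - r) * d + r * dstar \<le> ((1 - r) * (y \<bullet> w) + r * (u \<bullet> w)) * d" using mge mw by simp
    hence A1: "(1 - r) + r * \<rho> \<le> (1 - r) * (y \<bullet> w) + r * (u \<bullet> w)"
      unfolding \<rho>_def using dp by (simp add: field_simps)
    have "(1 - r) * (y \<bullet> w) \<le> (1 - r)" using yle wp(1) r by (simp add: mult_left_le)
    hence "r * \<rho> \<le> r * (u \<bullet> w)" using A1 by simp
    hence "\<rho> \<le> u \<bullet> w" using r by simp
    thus "\<exists>w. N w \<le> 1 \<and> u \<bullet> w \<ge> \<rho> \<and> (1 - r) * (y \<bullet> w) + r * (u \<bullet> w) \<ge> (1 - r) + r * \<rho>"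
      using wp(1) A1 by blast
  qed
  have "u \<bullet> vmax N y \<ge> \<rho>" by (rule limit_lemma[OF yle H])
  hence "ystar \<bullet> vmax N y \<ge> S * \<rho>" unfolding u_def using Sp by (simp add: field_simps)
  thus ?thesis using dge unfolding S_def \<rho>_def by simp
qed

end

lemma proxy_pres:
  assumes c: "c > 0" and la: "lab a = 1 \<or> lab a = -1"
    and vpos: "ystar \<bullet> vmax N yy \<ge> 0"
    and hp: "lab a = 1 \<longrightarrow> ystar \<bullet> a + bstar \<ge> K"
    and hm: "lab a = -1 \<longrightarrow> - (ystar \<bullet> a) - bstar \<ge> K"
  shows "(lab a = 1 \<longrightarrow> ystar \<bullet> proxy N c lab a yy bb + bstar \<ge> K) \<and>
         (lab a = -1 \<longrightarrow> - (ystar \<bullet> proxy N c lab a yy bb) - bstar \<ge> K)"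
proof -
  define q where "q = (yy \<bullet> a + bb) / dual_norm N yy"
  define v where "v = vmax N yy"
  have v: "ystar \<bullet> v \<ge> 0" using vpos v_def by simp
  have p1: "ystar \<bullet> (a + (2 / c - q) *\<^sub>R v) \<ge> ystar \<bullet> a" if "q < 2 / c"
  proof -
    have "(2 / c - q) * (ystar \<bullet> v) \<ge> 0" using that v by simp
    thus ?thesis by (simp add: inner_add_right)
  qed
  have p2: "ystar \<bullet> (a - q *\<^sub>R v) \<le> ystar \<bullet> a" if "0 \<le> q"
  proof -
    have "q * (ystar \<bullet> v) \<ge> 0" using that v by simp
    thus ?thesis by (simp add: inner_diff_right)
  qed
  show ?thesis
    unfolding proxy_def Let_def q_def[symmetric] v_def[symmetric]
    using la hp hm p1 p2 by (auto split: if_splits)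
qed

theorem mainTheorem6:
  fixes N :: "real^'n \<Rightarrow> real"
    and c :: real
    and \<A> :: "(real^'n) set"
    and lab :: "real^'n \<Rightarrow> real"
    and ystar :: "real^'n" and bstar :: real and dstar :: real
    and init :: "(real^'n) list"
    and A :: "nat \<Rightarrow> real^'n"
    and y :: "nat \<Rightarrow> real^'n" and b :: "nat \<Rightarrow> real" and d :: "nat \<Rightarrow> real"
    and Ap Am :: "nat \<Rightarrow> (real^'n) set"
    and t :: nat
  assumes norm: "is_norm N"
    and sc: "strictly_convex_norm N"
    and sc_dual: "strictly_convex_norm (dual_norm N)"
    and c_pos: "c > 0"
    and labels: "\<forall>a\<in>\<A>. lab a = 1 \<or> lab a = -1"
    \<comment> \<open>Margin assumption: the max-min d_* is attained at (y_*, b_*), y_* \<noteq> 0, d_* > 0\<close>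
    and ystar_nz: "ystar \<noteq> 0"
    and dstar_pos: "dstar > 0"
    and star_lb: "\<forall>a\<in>\<A>. lab a * (ystar \<bullet> a + bstar) / dual_norm N ystar \<ge> dstar"
    and star_inf: "\<forall>\<epsilon>>0. \<exists>a\<in>\<A>. lab a * (ystar \<bullet> a + bstar) / dual_norm N ystar < dstar + \<epsilon>"
    and star_max: "\<forall>y' b' \<epsilon>. y' \<noteq> 0 \<and> \<epsilon> > 0 \<longrightarrow>
                     (\<exists>a\<in>\<A>. lab a * (y' \<bullet> a + b') / dual_norm N y' < dstar + \<epsilon>)"
    \<comment> \<open>Initialization (terminating): agents arrive until both labels have been seen\<close>
    and init_len: "length init \<ge> 2"
    and init_in: "set init \<subseteq> \<A>"
    and init_same: "\<forall>i < length init - 1. lab (init ! i) = lab (init ! 0)"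
    and init_last: "lab (last init) \<noteq> lab (init ! 0)"
    and Ap0: "Ap 0 = {a \<in> set init. lab a = 1}"
    and Am0: "Am 0 = {a \<in> set init. lab a = -1}"
    \<comment> \<open>SMM iterations\<close>
    and agents: "\<forall>s\<ge>1. A s \<in> \<A>"
    and opt: "\<forall>s\<ge>1. dual_norm N (y s) \<le> 1
                 \<and> d s = margin_h (y s) (b s) (Ap (s - 1)) (Am (s - 1))
                 \<and> (\<forall>y' b'. dual_norm N y' \<le> 1 \<longrightarrow>
                      margin_h y' b' (Ap (s - 1)) (Am (s - 1)) \<le> d s)"
    and Ap_step: "\<forall>s\<ge>1. Ap s = (if lab (A s) = 1
                   then insert (proxy N c lab (A s) (y s) (b s)) (Ap (s - 1)) else Ap (s - 1))"
    and Am_step: "\<forall>s\<ge>1. Am s = (if lab (A s) = -1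
                   then insert (proxy N c lab (A s) (y s) (b s)) (Am (s - 1)) else Am (s - 1))"
    and t_pos: "t \<ge> 1"
  shows "ystar \<bullet> vmax N (y t) \<ge> dual_norm N ystar * (dstar / d t)
         \<and> dual_norm N ystar * (dstar / d t) > 0"
proof -
  interpret nms N using norm sc by unfold_locales
  define S where "S = dual_norm N ystar"
  have Sp: "S > 0" unfolding S_def using dual_pos[OF ystar_nz] .
  define K where "K = dstar * S"
  have inA: "(lab a = 1 \<longrightarrow> ystar \<bullet> a + bstar \<ge> K) \<and> (lab a = -1 \<longrightarrow> - (ystar \<bullet> a) - bstar \<ge> K)"
    if "a \<in> \<A>" for a
  proof -
    have "lab a * (ystar \<bullet> a + bstar) / S \<ge> dstar" using star_lb that S_def by auto
    hence "lab a * (ystar \<bullet> a + bstar) \<ge> K" unfolding K_def using Sp by (simp add: field_simps)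
    thus ?thesis by auto
  qed
  define inv where "inv s \<longleftrightarrow> finite (Ap s) \<and> finite (Am s) \<and> Ap s \<noteq> {} \<and> Am s \<noteq> {} \<and>
      (\<forall>x\<in>Ap s. ystar \<bullet> x + bstar \<ge> K) \<and> (\<forall>x\<in>Am s. - (ystar \<bullet> x) - bstar \<ge> K)" for s
  have keyS: "ystar \<bullet> vmax N (y s) \<ge> S * (dstar / d s) \<and> d s \<ge> dstar"
    if "inv (s - 1)" "s \<ge> 1" for s
  proof -
    have o: "dual_norm N (y s) \<le> 1" "d s = margin_h (y s) (b s) (Ap (s - 1)) (Am (s - 1))"
      "\<forall>y' b'. dual_norm N y' \<le> 1 \<longrightarrow> margin_h y' b' (Ap (s - 1)) (Am (s - 1)) \<le> d s"
      using opt that(2) by auto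
    show ?thesis unfolding S_def
      by (rule key[OF _ _ _ _ ystar_nz dstar_pos _ _ o]) (use that(1) in \<open>auto simp: inv_def K_def S_def\<close>)
  qed
  have invall: "inv s" for s
  proof (induction s)
    case 0
    define a0 where "a0 = init ! 0"
    define a1 where "a1 = last init"
    have "a0 \<in> set init" "a1 \<in> set init" unfolding a0_def a1_def using init_len
      by (auto intro!: nth_mem last_in_set)
    hence A: "a0 \<in> \<A>" "a1 \<in> \<A>" using init_in by auto
    have lab: "(lab a0 = 1 \<and> lab a1 = -1) \<or> (lab a0 = -1 \<and> lab a1 = 1)"
    proof -
      have "lab a0 = 1 \<or> lab a0 = -1" "lab a1 = 1 \<or> lab a1 = -1" using labels A by auto
      moreover have "lab a1 \<noteq> lab a0" using init_last unfolding a0_def a1_def .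
      ultimately show ?thesis by auto
    qed
    have ne: "Ap 0 \<noteq> {}" "Am 0 \<noteq> {}" unfolding Ap0 Am0
      using lab \<open>a0 \<in> set init\<close> \<open>a1 \<in> set init\<close> by auto
    show ?case unfolding inv_def using ne inA init_in unfolding Ap0 Am0 by auto
  next
    case (Suc s)
    have ks: "ystar \<bullet> vmax N (y (Suc s)) \<ge> S * (dstar / d (Suc s)) \<and> d (Suc s) \<ge> dstar"
      using keyS[of "Suc s"] Suc by simp
    have "S * (dstar / d (Suc s)) \<ge> 0" using ks Sp dstar_pos by simp
    hence vpos: "ystar \<bullet> vmax N (y (Suc s)) \<ge> 0" using ks by linarith
    have As: "A (Suc s) \<in> \<A>" using agents by simp
    have la: "lab (A (Suc s)) = 1 \<or> lab (A (Suc s)) = -1" using labels As by blast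
    have P: "(lab (A (Suc s)) = 1 \<longrightarrow> ystar \<bullet> proxy N c lab (A (Suc s)) (y (Suc s)) (b (Suc s)) + bstar \<ge> K) \<and>
         (lab (A (Suc s)) = -1 \<longrightarrow> - (ystar \<bullet> proxy N c lab (A (Suc s)) (y (Suc s)) (b (Suc s))) - bstar \<ge> K)"
      using proxy_pres[where lab=lab and a="A (Suc s)" and ystar=ystar and yy="y (Suc s)" and bstar=bstar and K=K and bb="b (Suc s)" and c=c, OF c_pos la vpos] inA[OF As] by blast
    have eqs: "Ap (Suc s) = (if lab (A (Suc s)) = 1
                   then insert (proxy N c lab (A (Suc s)) (y (Suc s)) (b (Suc s))) (Ap s) else Ap s)"
      "Am (Suc s) = (if lab (A (Suc s)) = -1
                   then insert (proxy N c lab (A (Suc s)) (y (Suc s)) (b (Suc s))) (Am s) else Am s)"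
      using Ap_step Am_step by auto
    show ?case using Suc.IH P unfolding inv_def eqs by auto
  qed
  have r: "ystar \<bullet> vmax N (y t) \<ge> S * (dstar / d t) \<and> d t \<ge> dstar"
    using keyS[OF invall t_pos] .
  hence "S * (dstar / d t) > 0" using Sp dstar_pos by simp
  thus ?thesis using r unfolding S_def by simp
qed

end
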